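(* Let $D$ be a division ring and $R$ a maximal subring of $D$. Then either there exists $\lambda\in D\setminus R$ with $\lambda R\subseteq R\lambda$ (equivalently $R\lambda\subseteq\lambda R$), or $N_l(R)=N_r(R)=N(R)=U(R)\cup\{0\}$.
   Context: All rings are associative unital and subrings share the identity. A maximal subring of a ring $T$ is a proper subring maximal under inclusion among proper subrings of $T$. For a subring $R$ of a division ring $D$: $N_l(R)=\{x\in D: Rx\subseteq xR\}$, $N_r(R)=\{x\in D: xR\subseteq Rx\}$, $N(R)=\{x\in D: xR=Rx\}$; $U(R)$ is the set of units of $R$. *)

theory Defs
  imports Main
begin

definition is_subring :: "'a::ring_1 set \<Rightarrow> bool" where
  "is_subring R \<longleftrightarrow> 1 \<in> R \<and> (\<forall>x\<in>R. \<forall>y\<in>R. x - y \<in> R \<and> x * y \<in> R)"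

definition maximal_subring :: "'a::ring_1 set \<Rightarrow> bool" where
  "maximal_subring R \<longleftrightarrow> is_subring R \<and> R \<noteq> UNIV \<and>
     (\<forall>S. is_subring S \<and> S \<noteq> UNIV \<and> R \<subseteq> S \<longrightarrow> S = R)"

definition N_l :: "'a::ring_1 set \<Rightarrow> 'a set" where
  "N_l R = {x. (\<lambda>r. r * x) ` R \<subseteq> (\<lambda>r. x * r) ` R}"

definition N_r :: "'a::ring_1 set \<Rightarrow> 'a set" where
  "N_r R = {x. (\<lambda>r. x * r) ` R \<subseteq> (\<lambda>r. r * x) ` R}"

definition N :: "'a::ring_1 set \<Rightarrow> 'a set" where
  "N R = {x. (\<lambda>r. x * r) ` R = (\<lambda>r. r * x) ` R}"

definition U :: "'a::ring_1 set \<Rightarrow> 'a set" where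
  "U R = {x \<in> R. \<exists>y\<in>R. x * y = 1 \<and> y * x = 1}"

end

theory Submission
  imports Defs
begin

lemma conj_lemma:
  fixes R :: "'a::division_ring set" and c :: 'a
  assumes m: "maximal_subring R" and c0: "c \<noteq> 0"
    and h: "\<forall>r\<in>R. c * r * inverse c \<in> R"
  shows "\<forall>r\<in>R. inverse c * r * c \<in> R"
proof -
  have sR: "is_subring R" and nU: "R \<noteq> UNIV"
    and mx: "\<And>S. is_subring S \<Longrightarrow> S \<noteq> UNIV \<Longrightarrow> R \<subseteq> S \<Longrightarrow> S = R"
    using m unfolding maximal_subring_def by blast+
  define S where "S = (\<lambda>r. inverse c * r * c) ` R"
  have ic: "inverse c * c = 1" "c * inverse c = 1" using c0 by simp_all
  have "is_subring S"
    unfolding is_subring_def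
  proof (intro conjI ballI)
    show "1 \<in> S" unfolding S_def using sR ic
      by (auto simp: is_subring_def image_iff intro!: bexI[of _ 1])
  next
    fix x y assume "x \<in> S" "y \<in> S"
    then obtain a b where a: "a \<in> R" "x = inverse c * a * c" and b: "b \<in> R" "y = inverse c * b * c"
      unfolding S_def by blast
    have "a - b \<in> R" "a * b \<in> R" using sR a b unfolding is_subring_def by auto
    moreover have "x - y = inverse c * (a - b) * c" using a b by (simp add: algebra_simps)
    moreover have "x * y = inverse c * (a * b) * c"
    proof -
      have "x * y = inverse c * a * (c * inverse c) * b * c" using a b by (simp add: mult.assoc)
      also have "\<dots> = inverse c * (a * b) * c" using ic by (simp add: mult.assoc)
      finally show ?thesis .
    qed
    ultimately show "x - y \<in> S" "x * y \<in> S" unfolding S_def by auto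
  qed
  moreover have "R \<subseteq> S"
  proof
    fix r assume r: "r \<in> R"
    have "r = inverse c * (c * r * inverse c) * c"
      using ic by (simp add: mult.assoc[symmetric]) (simp add: mult.assoc)
    then show "r \<in> S" unfolding S_def using h r by blast
  qed
  moreover have "S \<noteq> UNIV"
  proof
    assume SU: "S = UNIV"
    have "R = UNIV"
    proof (rule set_eqI, rule iffI)
      fix w :: 'a
      have "inverse c * w * c \<in> S" using SU by simp
      then obtain r where r: "r \<in> R" "inverse c * w * c = inverse c * r * c" unfolding S_def by blast
      then have "w = r" using c0
        by (metis mult_cancel_left mult_cancel_right inverse_zero_imp_zero)
      then show "w \<in> R" using r by simp
    qed simp
    then show False using nU by simp
  qed
  ultimately have "S = R" using mx by blast
  then show ?thesis unfolding S_def by blast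
qed

lemma mem_N_l:
  fixes R :: "'a::division_ring set"
  assumes "x \<noteq> 0"
  shows "x \<in> N_l R \<longleftrightarrow> (\<forall>r\<in>R. inverse x * r * x \<in> R)"
proof
  assume "x \<in> N_l R"
  then have h: "\<forall>r\<in>R. \<exists>s\<in>R. r * x = x * s" unfolding N_l_def by blast
  show "\<forall>r\<in>R. inverse x * r * x \<in> R"
  proof
    fix r assume "r \<in> R"
    then obtain s where "s \<in> R" "r * x = x * s" using h by blast
    then have "inverse x * r * x = s" using assms
      by (metis mult.assoc left_inverse mult_1_left)
    then show "inverse x * r * x \<in> R" using \<open>s \<in> R\<close> by simp
  qed
next
  assume h: "\<forall>r\<in>R. inverse x * r * x \<in> R"
  show "x \<in> N_l R" unfolding N_l_def
  proof (clarsimp)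
    fix r assume r: "r \<in> R"
    have "r * x = x * (inverse x * r * x)" using assms by (simp add: mult.assoc[symmetric])
    then show "r * x \<in> (\<lambda>r. x * r) ` R" using h r by blast
  qed
qed

lemma mem_N_r:
  fixes R :: "'a::division_ring set"
  assumes "x \<noteq> 0"
  shows "x \<in> N_r R \<longleftrightarrow> (\<forall>r\<in>R. x * r * inverse x \<in> R)"
proof
  assume "x \<in> N_r R"
  then have h: "\<forall>r\<in>R. \<exists>s\<in>R. x * r = s * x" unfolding N_r_def by blast
  show "\<forall>r\<in>R. x * r * inverse x \<in> R"
  proof
    fix r assume "r \<in> R"
    then obtain s where "s \<in> R" "x * r = s * x" using h by blast
    then show "x * r * inverse x \<in> R" using assms
      by (simp add: mult.assoc)
  qed
next
  assume h: "\<forall>r\<in>R. x * r * inverse x \<in> R"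
  show "x \<in> N_r R" unfolding N_r_def
  proof (clarsimp)
    fix r assume r: "r \<in> R"
    have "x * r = (x * r * inverse x) * x" using assms by (simp add: mult.assoc)
    then show "x * r \<in> (\<lambda>r. r * x) ` R" using h r by blast
  qed
qed

lemma mem_N:
  fixes R :: "'a::division_ring set"
  shows "x \<in> N R \<longleftrightarrow> x \<in> N_l R \<and> x \<in> N_r R"
  unfolding N_def N_l_def N_r_def by blast

theorem lemma2p2:
  fixes R :: "'a::division_ring set"
  assumes "maximal_subring R"
  shows "(\<exists>l. l \<notin> R \<and> (\<lambda>r. l * r) ` R \<subseteq> (\<lambda>r. r * l) ` R)
         \<or> (N_l R = N_r R \<and> N_r R = N R \<and> N R = U R \<union> {0})"
proof (rule disjCI, rule ccontr)
  assume "\<not> (N_l R = N_r R \<and> N_r R = N R \<and> N R = U R \<union> {0})"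
  then have contra: "\<not> (N_l R = N_r R \<and> N_r R = N R \<and> N R = U R \<union> {0})" .
  assume A: "\<not> (\<exists>l. l \<notin> R \<and> (\<lambda>r. l * r) ` R \<subseteq> (\<lambda>r. r * l) ` R)"
  have sR: "is_subring R" using assms unfolding maximal_subring_def by blast
  have cl: "\<And>a b. a \<in> R \<Longrightarrow> b \<in> R \<Longrightarrow> a * b \<in> R" "1 \<in> R"
    using sR unfolding is_subring_def by auto
  have zR: "0 \<in> R" using sR unfolding is_subring_def by (metis diff_self)
  have z: "0 \<in> N_l R" "0 \<in> N_r R" "0 \<in> N R" unfolding N_l_def N_r_def N_def by auto
  have lN: "x \<in> N R" if "x \<in> N_l R" for x
  proof (cases "x = 0")
    case False
    have "inverse x \<noteq> 0" using False by simp
    moreover have "\<forall>r\<in>R. inverse x * r * inverse (inverse x) \<in> R"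
      using that False mem_N_l by auto
    ultimately have "\<forall>r\<in>R. inverse (inverse x) * r * inverse x \<in> R"
      using conj_lemma[OF assms] by blast
    then have "x \<in> N_r R" using False mem_N_r by auto
    then show ?thesis using that mem_N by blast
  qed (use z in auto)
  have rN: "x \<in> N R" if "x \<in> N_r R" for x
  proof (cases "x = 0")
    case False
    have "\<forall>r\<in>R. x * r * inverse x \<in> R"
      using that False mem_N_r by auto
    then have "\<forall>r\<in>R. inverse x * r * x \<in> R"
      using conj_lemma[OF assms False] by blast
    then have "x \<in> N_l R" using False mem_N_l by auto
    then show ?thesis using that mem_N by blast
  qed (use z in auto)
  have e1: "N_l R = N R" using lN mem_N by blast
  have e2: "N_r R = N R" using rN mem_N by blast
  have NR: "x \<in> R" if "x \<in> N R" for x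
    using A that mem_N unfolding N_r_def by blast
  have Ninv: "inverse x \<in> N R" if "x \<in> N R" for x
  proof (cases "x = 0")
    case False
    then have "inverse x \<noteq> 0" by simp
    have "\<forall>r\<in>R. inverse x * r * inverse (inverse x) \<in> R"
      using that False mem_N_l mem_N by auto
    then have "inverse x \<in> N_r R" using mem_N_r[OF \<open>inverse x \<noteq> 0\<close>] by blast
    then show ?thesis using rN by blast
  qed (use z in auto)
  have e3: "N R = U R \<union> {0}"
  proof (rule set_eqI, rule iffI)
    fix x assume x: "x \<in> N R"
    show "x \<in> U R \<union> {0}"
    proof (cases "x = 0")
      case False
      have "x \<in> R" "inverse x \<in> R" using NR Ninv x by auto
      then show ?thesis using False unfolding U_def by (auto intro!: bexI[of _ "inverse x"])
    qed simp
  next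
    fix x assume x: "x \<in> U R \<union> {0}"
    show "x \<in> N R"
    proof (cases "x = 0")
      case False
      then obtain y where y: "x \<in> R" "y \<in> R" "x * y = 1" "y * x = 1" using x unfolding U_def by auto
      have yi: "y = inverse x" using y by (metis inverse_unique)
      have "\<forall>r\<in>R. x * r * inverse x \<in> R" using y yi cl by auto
      then have "x \<in> N_r R" using mem_N_r[OF False] by blast
      then show ?thesis using rN by blast
    qed (use z in simp)
  qed
  show False using contra e1 e2 e3 by simp
qed

end
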